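(* Let $q$ be a prime power with $q=3m+1$, and let $a\in D_1^3\cup D_2^3$. Let $$M=\begin{pmatrix}1&a^2&a\\ a^{-2}&1&a^{-1}\\ a^{-1}&a&1\end{pmatrix}.$$ Then the $3\times 3$ block matrix whose $(i,j)$ block is $C_{M_{ij}}$ is the adjacency matrix of a directed strongly regular graph with parameters $(3(3m+1),\ 3m,\ m,\ m-1,\ m)$.
   Context: Fix a primitive element $\gamma$ of $\mathbb{F}_q$; $D_i^e=\gamma^i\langle\gamma^e\rangle$ ($e\mid q-1$) are the cyclotomic classes, here with $e=3$. For $\sigma\in\mathbb{F}_q^*$, $C_\sigma$ is the $q\times q$ $0$-$1$ matrix with rows and columns indexed by $\mathbb{F}_q$ and $(C_\sigma)_{x,y}=1$ iff $x\in\sigma y+D_0^e$. A directed strongly regular graph with parameters $(v,k,t,\lambda,\mu)$ is a digraph (no loops, no multiple arcs) on $v$ vertices whose adjacency matrix $A$ satisfies $A^2=tI+\lambda A+\mu(J-I-A)$ and $AJ=JA=kJ$. *)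

theory Defs
  imports Main
begin

definition primitive_elem :: "'a::{finite,field} \<Rightarrow> bool" where
  "primitive_elem \<gamma> \<longleftrightarrow> (\<forall>x. x \<noteq> 0 \<longrightarrow> (\<exists>n::nat. x = \<gamma> ^ n))"

definition cyc_class :: "'a::{finite,field} \<Rightarrow> nat \<Rightarrow> nat \<Rightarrow> 'a set" where
  "cyc_class \<gamma> e i = {\<gamma> ^ (i + e * k) | k. True}"

definition Cmat :: "'a::{finite,field} \<Rightarrow> nat \<Rightarrow> 'a \<Rightarrow> 'a \<Rightarrow> 'a \<Rightarrow> int" where
  "Cmat \<gamma> e \<sigma> x y = (if x \<in> {\<sigma> * y + d | d. d \<in> cyc_class \<gamma> e 0} then 1 else 0)"

definition Mmat :: "'a::field \<Rightarrow> nat \<Rightarrow> nat \<Rightarrow> 'a" where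
  "Mmat a i j =
     (if i = 0 then (if j = 0 then 1 else if j = 1 then a^2 else a)
      else if i = 1 then (if j = 0 then inverse (a^2) else if j = 1 then 1 else inverse a)
      else (if j = 0 then inverse a else if j = 1 then a else 1))"

definition block_adj :: "'a::{finite,field} \<Rightarrow> 'a \<Rightarrow> (nat \<times> 'a) \<Rightarrow> (nat \<times> 'a) \<Rightarrow> int" where
  "block_adj \<gamma> a u w = Cmat \<gamma> 3 (Mmat a (fst u) (fst w)) (snd u) (snd w)"

definition dsrg :: "'v set \<Rightarrow> ('v \<Rightarrow> 'v \<Rightarrow> int) \<Rightarrow> nat \<Rightarrow> nat \<Rightarrow> nat \<Rightarrow> nat \<Rightarrow> nat \<Rightarrow> bool" where
  "dsrg V A v k t lam \<mu> \<longleftrightarrow>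
     finite V \<and> card V = v \<and>
     (\<forall>x\<in>V. \<forall>y\<in>V. A x y = 0 \<or> A x y = 1) \<and>
     (\<forall>x\<in>V. A x x = 0) \<and>
     (\<forall>x\<in>V. \<forall>z\<in>V. (\<Sum>y\<in>V. A x y * A y z) =
        int t * (if x = z then 1 else 0) + int lam * A x z
        + int \<mu> * (1 - (if x = z then 1 else 0) - A x z)) \<and>
     (\<forall>x\<in>V. (\<Sum>y\<in>V. A x y) = int k) \<and>
     (\<forall>y\<in>V. (\<Sum>x\<in>V. A x y) = int k)"

end

theory Submission imports Defs begin

lemma sum_ind: "(\<Sum>y\<in>(UNIV::'a::finite set). (if P y then 1 else 0::int)) = int (card {y. P y})"
  by (simp add: sum.If_cases)

lemma sum3: "(\<Sum>j\<in>{0..<3::nat}. f j) = f 0 + f 1 + (f 2::int)"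
  by (simp add: eval_nat_numeral)

lemma count_row:
  fixes D :: "'a::{finite,field} set"
  assumes "\<sigma> \<noteq> 0" shows "card {y. x - \<sigma>*y \<in> D} = card D"
proof -
  have "{y. x - \<sigma>*y \<in> D} = (\<lambda>d. (x-d)/\<sigma>) ` D"
  proof (rule set_eqI, rule iffI)
    fix y assume "y \<in> {y. x - \<sigma>*y \<in> D}"
    then show "y \<in> (\<lambda>d. (x-d)/\<sigma>) ` D"
      using assms by (auto intro!: image_eqI[where x="x - \<sigma>*y"])
  next
    fix y assume "y \<in> (\<lambda>d. (x-d)/\<sigma>) ` D"
    then show "y \<in> {y. x - \<sigma>*y \<in> D}" using assms by auto
  qed
  moreover have "inj_on (\<lambda>d. (x-d)/\<sigma>) D" using assms by (auto simp: inj_on_def)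
  ultimately show ?thesis by (simp add: card_image)
qed

lemma count_col:
  fixes D :: "'a::{finite,field} set"
  shows "card {x. x - \<sigma>*y \<in> D} = card D"
proof -
  have "{x. x - \<sigma>*y \<in> D} = (\<lambda>d. d + \<sigma>*y) ` D"
    by (auto intro!: image_eqI[where x="_ - \<sigma>*y"])
  moreover have "inj_on (\<lambda>d. d + \<sigma>*y) D" by (auto simp: inj_on_def)
  ultimately show ?thesis by (simp add: card_image)
qed

lemma count_pair:
  fixes D :: "'a::{finite,field} set"
  assumes "\<sigma> \<noteq> 0"
  shows "card {y. x - \<sigma>*y \<in> D \<and> y - \<tau>*z \<in> D}
       = card {e \<in> (\<lambda>d. \<sigma>*d) ` D. (x - \<sigma>*\<tau>*z) - e \<in> D}"
proof -
  have "{y. x - \<sigma>*y \<in> D \<and> y - \<tau>*z \<in> D} =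
     (\<lambda>e. \<tau>*z + e/\<sigma>) ` {e \<in> (\<lambda>d. \<sigma>*d) ` D. (x - \<sigma>*\<tau>*z) - e \<in> D}"
  proof (rule set_eqI, rule iffI)
    fix y assume "y \<in> {y. x - \<sigma>*y \<in> D \<and> y - \<tau>*z \<in> D}"
    then show "y \<in> (\<lambda>e. \<tau>*z + e/\<sigma>) ` {e \<in> (\<lambda>d. \<sigma>*d) ` D. (x - \<sigma>*\<tau>*z) - e \<in> D}"
    proof -
      assume H: "y \<in> {y. x - \<sigma>*y \<in> D \<and> y - \<tau>*z \<in> D}"
      let ?e = "\<sigma>*(y - \<tau>*z)"
      have "?e \<in> (\<lambda>d. \<sigma>*d) ` D" using H by auto
      moreover have "(x - \<sigma>*\<tau>*z) - ?e \<in> D" using H by (simp add: algebra_simps)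
      moreover have "y = \<tau>*z + ?e/\<sigma>" using assms by simp
      ultimately show ?thesis by blast
    qed
  next
    fix y assume "y \<in> (\<lambda>e. \<tau>*z + e/\<sigma>) ` {e \<in> (\<lambda>d. \<sigma>*d) ` D. (x - \<sigma>*\<tau>*z) - e \<in> D}"
    then show "y \<in> {y. x - \<sigma>*y \<in> D \<and> y - \<tau>*z \<in> D}" using assms
      by (auto simp: algebra_simps)
  qed
  moreover have "inj_on (\<lambda>e. \<tau>*z + e/\<sigma>) X" for X using assms by (auto simp: inj_on_def)
  ultimately show ?thesis by (simp add: card_image)
qed

lemma count_diff:
  fixes D :: "'a::{finite,field} set"
  shows "card {e. e \<noteq> 0 \<and> w - e \<in> D} = card (D - {w})"
proof -
  have "{e. e \<noteq> 0 \<and> w - e \<in> D} = (\<lambda>d. w - d) ` (D - {w})" by force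
  moreover have "inj_on (\<lambda>d. w - d) X" for X by (auto simp: inj_on_def)
  ultimately show ?thesis by (simp add: card_image)
qed

lemma generic:
  fixes D :: "'a::{finite,field} set" and c :: "nat \<Rightarrow> nat \<Rightarrow> 'a"
  assumes D0: "0 \<notin> D" and cardD: "card D = m" and cardU: "card (UNIV::'a set) = 3*m+1"
  and cnz: "\<And>i j. i<3 \<Longrightarrow> j<3 \<Longrightarrow> c i j \<noteq> 0"
  and cmul: "\<And>i j l. i<3 \<Longrightarrow> j<3 \<Longrightarrow> l<3 \<Longrightarrow> c i j * c j l = c i l"
  and cdisj: "\<And>i j j'. i<3 \<Longrightarrow> j<3 \<Longrightarrow> j'<3 \<Longrightarrow> j\<noteq>j' \<Longrightarrow>
        (\<lambda>d. c i j * d) ` D \<inter> (\<lambda>d. c i j' * d) ` D = {}"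
  shows "dsrg ({0..<3} \<times> UNIV) (\<lambda>u w. if snd u - c (fst u) (fst w) * snd w \<in> D then 1 else 0)
     (3*(3*m+1)) (3*m) m (m-1) m"
proof -
  define A where "A = (\<lambda>u w. if snd u - c (fst u) (fst w) * snd w \<in> D then 1 else (0::int))"
  have m1: "m \<ge> 1"
  proof (rule ccontr)
    assume "\<not> m \<ge> 1" then have "card (UNIV::'a set) = 1" using cardU by simp
    then obtain t where "(UNIV::'a set) = {t}" using card_1_singletonE by blast
    then have "(0::'a) = 1" by (metis UNIV_I singletonD)
    then show False by simp
  qed
  have cii: "c i i = 1" if "i<3" for i
  proof -
    have "c i i * c i i = c i i * 1" using cmul[OF that that that] by simp
    then show ?thesis using cnz[OF that that] by (metis mult_left_cancel)
  qed
  have sumV: "(\<Sum>u\<in>{0..<3} \<times> UNIV. f u) = (\<Sum>y\<in>UNIV. f (0,y)) + (\<Sum>y\<in>UNIV. f (1,y)) + (\<Sum>y\<in>UNIV. f (2,y))"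
    for f :: "nat \<times> 'a \<Rightarrow> int"
  proof -
    have "(\<Sum>u\<in>{0..<3} \<times> UNIV. f u) = (\<Sum>j\<in>{0..<3}. \<Sum>y\<in>UNIV. f (j,y))"
      by (simp add: sum.cartesian_product)
    then show ?thesis by (simp add: sum3)
  qed
  have row: "(\<Sum>w\<in>{0..<3} \<times> UNIV. A u w) = int (3*m)" if uV: "u \<in> {0..<3} \<times> UNIV" for u
  proof -
    obtain i x where u: "u = (i,x)" "i<3" using uV by (cases u) auto
    have "(\<Sum>y\<in>UNIV. A (i,x) (j,y)) = int m" if "j<3" for j
      unfolding A_def using count_row[OF cnz[OF u(2) that], where x=x and D=D] cardD
      by (simp add: sum_ind)
    then show ?thesis using sumV[of "\<lambda>w. A (i,x) w"] u by simp
  qed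
  have col: "(\<Sum>u\<in>{0..<3} \<times> UNIV. A u w) = int (3*m)" if wV: "w \<in> {0..<3} \<times> UNIV" for w
  proof -
    obtain l z where w: "w = (l,z)" "l<3" using wV by (cases w) auto
    have "(\<Sum>x\<in>UNIV. A (j,x) (l,z)) = int m" if "j<3" for j
      unfolding A_def using count_col[where \<sigma>="c j l" and y=z and D=D] cardD
      by (simp add: sum_ind)
    then show ?thesis using sumV[of "\<lambda>u. A u (l,z)"] w by simp
  qed
  have sq: "(\<Sum>v\<in>{0..<3} \<times> UNIV. A u v * A v w) = int m - A u w"
    if uV: "u \<in> {0..<3} \<times> UNIV" and wV: "w \<in> {0..<3} \<times> UNIV" for u w
  proof -
    obtain i x where u: "u = (i,x)" "i<3" using uV by (cases u) auto
    obtain l z where w: "w = (l,z)" "l<3" using wV by (cases w) auto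
    define W where "W = x - c i l * z"
    define E where "E j = (\<lambda>d. c i j * d) ` D" for j
    define P where "P e = (W - e \<in> D)" for e
    have one: "(\<Sum>y\<in>UNIV. A (i,x) (j,y) * A (j,y) (l,z)) = int (card {e \<in> E j. P e})" if "j<3" for j
    proof -
      have "(\<Sum>y\<in>UNIV. A (i,x) (j,y) * A (j,y) (l,z)) = int (card {y. x - c i j*y \<in> D \<and> y - c j l*z \<in> D})"
        unfolding A_def by (simp add: sum_ind[symmetric] if_distrib cong: if_cong) (rule sum.cong; auto)
      also have "\<dots> = int (card {e \<in> E j. P e})"
        using count_pair[OF cnz[OF u(2) that], where x=x and D=D and \<tau>="c j l" and z=z]
        unfolding E_def P_def W_def using cmul[OF u(2) that w(2)] by (simp add: mult.assoc)
      finally show ?thesis .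
    qed
    have Esub: "E j \<subseteq> {e. e \<noteq> 0}" if "j<3" for j
      using cnz[OF u(2) that] D0 unfolding E_def by auto
    have Ecard: "card (E j) = m" if "j<3" for j
      unfolding E_def using cnz[OF u(2) that] cardD
      by (subst card_image) (auto simp: inj_on_def)
    have d01: "E 0 \<inter> E 1 = {}" and d02: "E 0 \<inter> E 2 = {}" and d12: "E 1 \<inter> E 2 = {}"
      unfolding E_def using cdisj[OF u(2)] by auto
    have cardNZ: "card {e::'a. e \<noteq> 0} = 3*m"
    proof -
      have "{e::'a. e \<noteq> 0} = UNIV - {0}" by auto
      then show ?thesis using cardU by simp
    qed
    have cu: "card (E 0 \<union> E 1 \<union> E 2) = 3*m"
      using d01 d02 d12 Ecard by (subst card_Un_disjoint; auto simp: card_Un_disjoint)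
    have Eun: "E 0 \<union> E 1 \<union> E 2 = {e. e \<noteq> 0}"
      by (rule card_subset_eq) (use Esub cu cardNZ in auto)
    have "card {e \<in> E 0. P e} + card {e \<in> E 1. P e} + card {e \<in> E 2. P e}
        = card {e \<in> E 0 \<union> E 1 \<union> E 2. P e}"
    proof -
      have "{e \<in> E 0 \<union> E 1 \<union> E 2. P e} = ({e \<in> E 0. P e} \<union> {e \<in> E 1. P e}) \<union> {e \<in> E 2. P e}" by auto
      moreover have "card (({e \<in> E 0. P e} \<union> {e \<in> E 1. P e}) \<union> {e \<in> E 2. P e})
           = card {e \<in> E 0. P e} + card {e \<in> E 1. P e} + card {e \<in> E 2. P e}"
      proof -
        have "card ({e \<in> E 0. P e} \<union> {e \<in> E 1. P e}) = card {e \<in> E 0. P e} + card {e \<in> E 1. P e}"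
          by (rule card_Un_disjoint) (use d01 in auto)
        moreover have "card (({e \<in> E 0. P e} \<union> {e \<in> E 1. P e}) \<union> {e \<in> E 2. P e}) =
           card ({e \<in> E 0. P e} \<union> {e \<in> E 1. P e}) + card {e \<in> E 2. P e}"
          by (rule card_Un_disjoint) (use d02 d12 in auto)
        ultimately show ?thesis by simp
      qed
      ultimately show ?thesis by simp
    qed
    also have "\<dots> = card (D - {W})" unfolding Eun P_def using count_diff[where w=W and D=D] by simp
    finally have tot: "card {e \<in> E 0. P e} + card {e \<in> E 1. P e} + card {e \<in> E 2. P e} = card (D - {W})" .
    have "(\<Sum>v\<in>{0..<3} \<times> UNIV. A u v * A v w) = int (card (D - {W}))"
      using sumV[of "\<lambda>v. A (i,x) v * A v (l,z)"] u w one tot by simp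
    also have "\<dots> = int m - A u w"
      unfolding A_def u w W_def using cardD m1 by (auto simp: card_Diff_singleton_if)
    finally show ?thesis .
  qed
  have diag: "A u u = 0" if "u \<in> {0..<3} \<times> UNIV" for u
    using that cii D0 unfolding A_def by auto
  show ?thesis
    unfolding dsrg_def A_def[symmetric]
  proof (intro conjI ballI)
    show "card ({0..<3::nat} \<times> (UNIV::'a set)) = 3 * (3 * m + 1)" using cardU by (simp add: card_cartesian_product)
  next
    fix u w assume "u \<in> {0..<3::nat} \<times> (UNIV::'a set)" "w \<in> {0..<3::nat} \<times> (UNIV::'a set)"
    then show "(\<Sum>v\<in>{0..<3} \<times> UNIV. A u v * A v w) =
        int m * (if u = w then 1 else 0) + int (m - 1) * A u w + int m * (1 - (if u = w then 1 else 0) - A u w)"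
      using sq diag m1 by (auto simp: of_nat_diff algebra_simps)
  qed (simp_all add: row col diag, auto simp: A_def)
qed

lemma Cmat_eq: "Cmat \<gamma> e \<sigma> x y = (if x - \<sigma>*y \<in> cyc_class \<gamma> e 0 then 1 else 0)"
proof -
  have "x \<in> {\<sigma> * y + d | d. d \<in> cyc_class \<gamma> e 0} \<longleftrightarrow> x - \<sigma>*y \<in> cyc_class \<gamma> e 0"
  proof
    assume "x - \<sigma>*y \<in> cyc_class \<gamma> e 0"
    moreover have "x = \<sigma>*y + (x - \<sigma>*y)" by simp
    ultimately show "x \<in> {\<sigma> * y + d | d. d \<in> cyc_class \<gamma> e 0}" by blast
  qed auto
  then show ?thesis by (simp add: Cmat_def)
qed

lemma fermat:
  fixes x :: "'a::{finite,field}"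
  assumes "x \<noteq> 0"
  shows "x ^ card {y::'a. y \<noteq> 0} = 1"
proof -
  define S where "S = {y::'a. y \<noteq> 0}"
  have img: "(\<lambda>y. x*y) ` S = S"
  proof (rule set_eqI, rule iffI)
    fix y assume "y \<in> S" then show "y \<in> (\<lambda>y. x*y) ` S"
      using assms by (auto simp: S_def intro!: image_eqI[where x="y/x"])
  qed (use assms in \<open>auto simp: S_def\<close>)
  have inj: "inj_on (\<lambda>y. x*y) S" using assms by (auto simp: inj_on_def)
  have "prod id S = prod id ((\<lambda>y. x*y) ` S)" using img by simp
  also have "\<dots> = prod (\<lambda>y. x*y) S" using inj by (simp add: prod.reindex)
  also have "\<dots> = x ^ card S * prod id S" by (simp add: prod.distrib)
  finally have "1 * prod id S = x ^ card S * prod id S" by simp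
  moreover have "prod id S \<noteq> 0" by (simp add: S_def)
  ultimately show ?thesis unfolding S_def by (metis mult_right_cancel)
qed

locale prim =
  fixes \<gamma> :: "'a::{finite,field}" and m :: nat
  assumes prim: "primitive_elem \<gamma>" and cardU: "card (UNIV :: 'a set) = 3 * m + 1"
begin

lemma cardS: "card {y::'a. y \<noteq> 0} = 3*m"
proof -
  have "{e::'a. e \<noteq> 0} = UNIV - {0}" by auto
  then show ?thesis using cardU by simp
qed

lemma m1: "m \<ge> 1"
proof (rule ccontr)
  assume "\<not> m \<ge> 1" then have "card (UNIV::'a set) = 1" using cardU by simp
  then obtain t where "(UNIV::'a set) = {t}" using card_1_singletonE by blast
  then have "(0::'a) = 1" by (metis UNIV_I singletonD)
  then show False by simp
qed

lemma gnz: "\<gamma> \<noteq> 0"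
proof
  assume g: "\<gamma> = 0"
  have "{y::'a. y \<noteq> 0} \<subseteq> {1}"
  proof
    fix y :: 'a assume "y \<in> {y. y \<noteq> 0}"
    then obtain n where "y = \<gamma>^n" "y \<noteq> 0" using prim unfolding primitive_elem_def by auto
    then show "y \<in> {1}" using g by (cases n) auto
  qed
  then have "card {y::'a. y \<noteq> 0} \<le> card {1::'a}" by (intro card_mono) auto
  then show False using cardS m1 by simp
qed

lemma g3m: "\<gamma> ^ (3*m) = 1"
  using fermat[OF gnz] cardS by simp

lemma gmod: "\<gamma> ^ n = \<gamma> ^ (n mod (3*m))"
proof -
  have "\<gamma> ^ n = \<gamma> ^ ((3*m) * (n div (3*m)) + n mod (3*m))" by simp
  also have "\<dots> = (\<gamma>^(3*m))^(n div (3*m)) * \<gamma> ^ (n mod (3*m))" by (simp only: power_add power_mult)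
  finally show ?thesis by (simp add: g3m)
qed

lemma ginj: "inj_on (\<lambda>n. \<gamma>^n) {..<3*m}"
proof -
  have "{y::'a. y \<noteq> 0} \<subseteq> (\<lambda>n. \<gamma>^n) ` {..<3*m}"
  proof
    fix y :: 'a assume "y \<in> {y. y \<noteq> 0}"
    then obtain n where "y = \<gamma>^n" using prim unfolding primitive_elem_def by auto
    then have "y = \<gamma>^(n mod (3*m))" using gmod by simp
    moreover have "n mod (3*m) < 3*m" using m1 by simp
    ultimately show "y \<in> (\<lambda>n. \<gamma>^n) ` {..<3*m}" by blast
  qed
  then have "card {y::'a. y \<noteq> 0} \<le> card ((\<lambda>n. \<gamma>^n) ` {..<3*m})"
    by (intro card_mono) auto
  then have "3*m \<le> card ((\<lambda>n. \<gamma>^n) ` {..<3*m})" using cardS by simp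
  moreover have "card ((\<lambda>n. \<gamma>^n) ` {..<3*m}) \<le> 3*m"
    using card_image_le[of "{..<3*m}" "\<lambda>n. \<gamma>^n"] by simp
  ultimately show ?thesis by (intro eq_card_imp_inj_on) auto
qed

lemma geq: "\<gamma>^n = \<gamma>^n' \<Longrightarrow> n mod (3*m) = n' mod (3*m)"
proof -
  assume "\<gamma>^n = \<gamma>^n'"
  then have "\<gamma>^(n mod (3*m)) = \<gamma>^(n' mod (3*m))" using gmod[of n] gmod[of n'] by simp
  moreover have "n mod (3*m) \<in> {..<3*m}" "n' mod (3*m) \<in> {..<3*m}" using m1 by auto
  ultimately show ?thesis using inj_onD[OF ginj] by blast
qed

lemma cls: "\<gamma>^(i+3*k) = \<gamma>^(j+3*k') \<Longrightarrow> i < 3 \<Longrightarrow> j < 3 \<Longrightarrow> i = j"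
proof -
  assume "\<gamma>^(i+3*k) = \<gamma>^(j+3*k')" "i < 3" "j < 3"
  then have "(i+3*k) mod (3*m) = (j+3*k') mod (3*m)" using geq by blast
  then have "(i+3*k) mod (3*m) mod 3 = (j+3*k') mod (3*m) mod 3" by simp
  then have "(i+3*k) mod 3 = (j+3*k') mod 3" by (simp add: mod_mod_cancel)
  then show "i = j" using \<open>i<3\<close> \<open>j<3\<close> by simp
qed

abbreviation "D \<equiv> cyc_class \<gamma> 3 0"

lemma D_mem: "x \<in> D \<longleftrightarrow> (\<exists>k. x = \<gamma>^(3*k))"
  by (simp add: cyc_class_def)

lemma D0: "0 \<notin> D" using gnz by (auto simp: D_mem)

lemma Dmul: "x \<in> D \<Longrightarrow> y \<in> D \<Longrightarrow> x*y \<in> D"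
proof -
  assume "x \<in> D" "y \<in> D"
  then obtain k k' where "x = \<gamma>^(3*k)" "y = \<gamma>^(3*k')" by (auto simp: D_mem)
  then have "x*y = \<gamma>^(3*(k+k'))" by (simp add: power_add distrib_left)
  then show ?thesis unfolding D_mem by blast
qed

lemma Dinv: "x \<in> D \<Longrightarrow> inverse x \<in> D"
proof -
  assume "x \<in> D" then obtain k where k: "x = \<gamma>^(3*k)" by (auto simp: D_mem)
  have e: "3*k + 3*((m-1)*k) = 3*m*k" using m1 by (cases m) (auto simp: algebra_simps)
  have "\<gamma>^(3*k) * \<gamma>^(3*((m-1)*k)) = \<gamma>^(3*m*k)"
    by (simp only: power_add[symmetric] e)
  also have "\<dots> = (\<gamma>^(3*m))^k" by (rule power_mult)
  also have "\<dots> = 1" by (simp add: g3m)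
  finally have "inverse x = \<gamma>^(3*((m-1)*k))" unfolding k by (rule inverse_unique)
  then show ?thesis by (auto simp: D_mem)
qed

lemma cardD: "card D = m"
proof -
  have "D = (\<lambda>k. \<gamma>^(3*k)) ` {..<m}"
  proof (rule set_eqI, rule iffI)
    fix x assume "x \<in> D"
    then obtain k where k: "x = \<gamma>^(3*k)" by (auto simp: D_mem)
    then have "x = \<gamma>^(3*(k mod m))" using gmod[of "3*k"] by simp
    moreover have "k mod m < m" using m1 by simp
    ultimately show "x \<in> (\<lambda>k. \<gamma>^(3*k)) ` {..<m}" by blast
  qed (auto simp: D_mem)
  moreover have "inj_on (\<lambda>k. \<gamma>^(3*k)) {..<m}"
  proof (rule inj_onI)
    fix k k' assume "k \<in> {..<m}" "k' \<in> {..<m}" "\<gamma>^(3*k) = \<gamma>^(3*k')"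
    then have "(3*k) mod (3*m) = (3*k') mod (3*m)" using geq by blast
    then show "k = k'" using \<open>k \<in> {..<m}\<close> \<open>k' \<in> {..<m}\<close> by simp
  qed
  ultimately show ?thesis by (simp add: card_image)
qed

end


lemma (in prim) a_facts:
  assumes "a \<in> cyc_class \<gamma> 3 1 \<union> cyc_class \<gamma> 3 2"
  shows "a \<noteq> 0" "a \<notin> D" "a^2 \<notin> D"
proof -
  obtain s k where sk: "a = \<gamma>^(s+3*k)" "s = 1 \<or> s = 2"
    using assms unfolding cyc_class_def by blast
  show "a \<noteq> 0" using sk gnz by simp
  show "a \<notin> D"
  proof
    assume "a \<in> D" then obtain k' where "a = \<gamma>^(0+3*k')" by (auto simp: D_mem)
    then have "s = 0" using cls[of s k 0 k'] sk by auto
    then show False using sk by simp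
  qed
  have sq: "a^2 = \<gamma>^(2*s+3*(2*k))" using sk(1) by (simp add: power_mult[symmetric] algebra_simps)
  show "a^2 \<notin> D"
  proof
    assume "a^2 \<in> D" then obtain k' where k': "a^2 = \<gamma>^(0+3*k')" by (auto simp: D_mem)
    show False
    proof (cases "s = 1")
      case True
      then have "\<gamma>^(2+3*(2*k)) = \<gamma>^(0+3*k')" using sq k' by simp
      then show False using cls by fastforce
    next
      case False
      then have "s = 2" using sk by simp
      then have "\<gamma>^(1+3*(1+2*k)) = \<gamma>^(0+3*k')" using sq k' by (simp add: algebra_simps)
      then show False using cls by fastforce
    qed
  qed
qed

theorem mainTheorem9:
  fixes \<gamma> a :: "'a::{finite,field}" and m :: nat
  assumes "primitive_elem \<gamma>"
    and "card (UNIV :: 'a set) = 3 * m + 1"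
    and "a \<in> cyc_class \<gamma> 3 1 \<union> cyc_class \<gamma> 3 2"
  shows "dsrg ({0..<3} \<times> UNIV) (block_adj \<gamma> a)
           (3 * (3 * m + 1)) (3 * m) m (m - 1) m"
proof -
  interpret P: prim \<gamma> m using assms(1,2) by unfold_locales
  note af = P.a_facts[OF assms(3)]
  define b where "b j = (if j = 0 then a^2 else if j = (1::nat) then 1 else a)" for j
  have bnz: "b j \<noteq> 0" for j using af(1) by (simp add: b_def)
  have Mb: "Mmat a i j = b i / b j" if "i < 3" "j < 3" for i j
  proof -
    have "i \<in> {0,1,2}" "j \<in> {0,1,2}" using that by auto
    then show ?thesis using af(1) by (auto simp: Mmat_def b_def power2_eq_square field_simps)
  qed
  have ratio: "b j' / b j \<in> {a, a^2, inverse a, inverse (a^2)}" if "j < 3" "j' < 3" "j \<noteq> j'" for j j'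
  proof -
    have "j \<in> {0,1,2}" "j' \<in> {0,1,2}" using that by auto
    then show ?thesis using that af(1) by (auto simp: b_def power2_eq_square field_simps)
  qed
  have notD: "b j' / b j \<notin> P.D" if "j < 3" "j' < 3" "j \<noteq> j'" for j j'
  proof
    assume H: "b j' / b j \<in> P.D"
    have "a \<notin> P.D" "a^2 \<notin> P.D" using af by auto
    moreover have "inverse a \<notin> P.D" "inverse (a^2) \<notin> P.D"
      using af P.Dinv by (metis inverse_inverse_eq)+
    ultimately show False using H ratio[OF that] by auto
  qed
  have eq: "block_adj \<gamma> a = (\<lambda>u w. if snd u - Mmat a (fst u) (fst w) * snd w \<in> P.D then 1 else 0)"
    by (intro ext) (simp add: block_adj_def Cmat_eq)
  show ?thesis unfolding eq
  proof (rule generic[OF P.D0 P.cardD assms(2)])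
    fix i j :: nat assume "i < 3" "j < 3" then show "Mmat a i j \<noteq> 0" using Mb bnz by simp
  next
    fix i j l :: nat assume "i < 3" "j < 3" "l < 3"
    then show "Mmat a i j * Mmat a j l = Mmat a i l" using Mb bnz by simp
  next
    fix i j j' :: nat assume ij: "i < (3::nat)" "j < 3" "j' < 3" "j \<noteq> j'"
    show "(\<lambda>d. Mmat a i j * d) ` P.D \<inter> (\<lambda>d. Mmat a i j' * d) ` P.D = {}"
    proof (rule ccontr)
      assume "(\<lambda>d. Mmat a i j * d) ` P.D \<inter> (\<lambda>d. Mmat a i j' * d) ` P.D \<noteq> {}"
      then obtain d1 d2 where d: "d1 \<in> P.D" "d2 \<in> P.D" "Mmat a i j * d1 = Mmat a i j' * d2" by auto
      then have "b i / b j * d1 = b i / b j' * d2" using Mb ij by simp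
      moreover have "d1 \<noteq> 0" using P.D0 d(1) by auto
      ultimately have "b j' / b j = d2 * inverse d1" using bnz[of i] bnz[of j] bnz[of j']
        by (auto simp: field_simps)
      moreover have "d2 * inverse d1 \<in> P.D" using d P.Dmul P.Dinv by blast
      ultimately show False using notD ij by metis
    qed
  qed
qed

end
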